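(* With the matrices defined in the context, $\mathbf{A_N}$ is invertible and $$\mathbf{A_N}^{-1}=(\mathbf{B}^T\mathbf{B})^\dagger+(\mathbf{C}^T\mathbf{C})^\dagger .$$
   Context: Fix an integer $n\ge 2$ and set $h=1/n$. Let $I_m$ denote the $m\times m$ identity matrix and $\otimes$ the Kronecker product. Let $\mathrm{B}\in\mathbb{R}^{n\times(n-1)}$ be $\mathrm{B}=\frac1h M$, where $M_{i,i}=1$ and $M_{i+1,i}=-1$ for $1\le i\le n-1$, all other entries $0$. Define $\mathrm{B}^u_x=I_n\otimes \mathrm{B}$, $\mathrm{B}^v_y=\mathrm{B}\otimes I_n$, $\mathrm{B}^q_x=I_{n-1}\otimes\mathrm{B}$, $\mathrm{B}^q_y=\mathrm{B}\otimes I_{n-1}$. Let $\mathbf{B}=\begin{bmatrix}-\mathrm{B}^u_x & -\mathrm{B}^v_y\end{bmatrix}\in\mathbb{R}^{n^2\times 2n(n-1)}$ and $\mathbf{C}=\begin{bmatrix}-(\mathrm{B}^q_y)^T & (\mathrm{B}^q_x)^T\end{bmatrix}\in\mathbb{R}^{(n-1)^2\times 2n(n-1)}$, and let $\mathbf{A_N}=\mathbf{B}^T\mathbf{B}+\mathbf{C}^T\mathbf{C}$ (the Neumann velocity Laplacian). The superscript $\dagger$ denotes the Moore–Penrose pseudoinverse. *)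

theory Defs
  imports "Jordan_Normal_Form.Matrix"
begin

definition kron :: "'a::times mat \<Rightarrow> 'a mat \<Rightarrow> 'a mat" where
  "kron A B = mat (dim_row A * dim_row B) (dim_col A * dim_col B)
     (\<lambda>(i,j). A $$ (i div dim_row B, j div dim_col B) * B $$ (i mod dim_row B, j mod dim_col B))"

definition hcat :: "'a mat \<Rightarrow> 'a mat \<Rightarrow> 'a mat" where
  "hcat X Y = mat (dim_row X) (dim_col X + dim_col Y)
     (\<lambda>(i,j). if j < dim_col X then X $$ (i,j) else Y $$ (i, j - dim_col X))"

definition is_MP_pinv :: "real mat \<Rightarrow> real mat \<Rightarrow> bool" where
  "is_MP_pinv A X \<longleftrightarrow> X \<in> carrier_mat (dim_col A) (dim_row A) \<and>
     A * X * A = A \<and> X * A * X = X \<and>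
     (A * X)\<^sup>T = A * X \<and> (X * A)\<^sup>T = X * A"

definition pinv :: "real mat \<Rightarrow> real mat" where
  "pinv A = (THE X. is_MP_pinv A X)"

definition Mmat :: "nat \<Rightarrow> real mat" where
  "Mmat n = mat n (n - 1) (\<lambda>(i,j). if i = j then 1 else if i = j + 1 then -1 else 0)"

(* B = (1/h) M with h = 1/n *)
definition Bmat :: "nat \<Rightarrow> real mat" where
  "Bmat n = (1 / (1 / real n)) \<cdot>\<^sub>m Mmat n"

definition Bux :: "nat \<Rightarrow> real mat" where "Bux n = kron (1\<^sub>m n) (Bmat n)"
definition Bvy :: "nat \<Rightarrow> real mat" where "Bvy n = kron (Bmat n) (1\<^sub>m n)"
definition Bqx :: "nat \<Rightarrow> real mat" where "Bqx n = kron (1\<^sub>m (n - 1)) (Bmat n)"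
definition Bqy :: "nat \<Rightarrow> real mat" where "Bqy n = kron (Bmat n) (1\<^sub>m (n - 1))"

definition BB :: "nat \<Rightarrow> real mat" where "BB n = hcat (- Bux n) (- Bvy n)"
definition CC :: "nat \<Rightarrow> real mat" where "CC n = hcat (- (Bqy n)\<^sup>T) ((Bqx n)\<^sup>T)"

definition AN :: "nat \<Rightarrow> real mat" where
  "AN n = (BB n)\<^sup>T * BB n + (CC n)\<^sup>T * CC n"

end

theory Submission
  imports Defs "Jordan_Normal_Form.Determinant"
begin


lemma sum_divmod: "(\<Sum>k\<in>{0..<a*b}. f (k div b) (k mod b)) = (\<Sum>p\<in>{0..<(a::nat)}. \<Sum>q\<in>{0..<b}. f p q)"
proof (induction a)
  case 0 then show ?case by simp
next
  case (Suc a)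
  have "(\<Sum>k\<in>{0..<Suc a*b}. f (k div b) (k mod b)) =
        (\<Sum>k\<in>{0..<a*b}. f (k div b) (k mod b)) + (\<Sum>k\<in>{a*b..<a*b+b}. f (k div b) (k mod b))"
    by (simp add: sum.atLeastLessThan_concat add.commute)
  also have "(\<Sum>k\<in>{a*b..<a*b+b}. f (k div b) (k mod b)) = (\<Sum>q\<in>{0..<b}. f ((q + a*b) div b) ((q+a*b) mod b))"
    using sum.shift_bounds_nat_ivl[of "\<lambda>k. f (k div b) (k mod b)" 0 "a*b" b] by (simp add: add.commute)
  also have "\<dots> = (\<Sum>q\<in>{0..<b}. f a q)"
    by (rule sum.cong, auto)
  finally show ?case using Suc by simp
qed

lemma kron_dim[simp]: "dim_row (kron A B) = dim_row A * dim_row B" "dim_col (kron A B) = dim_col A * dim_col B"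
  by (auto simp: kron_def)

lemma kron_index[simp]: "i < dim_row A * dim_row B \<Longrightarrow> j < dim_col A * dim_col B \<Longrightarrow>
  kron A B $$ (i,j) = A $$ (i div dim_row B, j div dim_col B) * B $$ (i mod dim_row B, j mod dim_col B)"
  by (auto simp: kron_def)

lemma kron_carrier[simp]: "A \<in> carrier_mat a1 a2 \<Longrightarrow> B \<in> carrier_mat b1 b2 \<Longrightarrow> kron A B \<in> carrier_mat (a1*b1) (a2*b2)"
  by (metis carrier_matD(1) carrier_matD(2) carrier_matI kron_dim(1) kron_dim(2))

lemma div_lt: "i < a * b \<Longrightarrow> i div b < (a::nat)"
  by (simp add: less_mult_imp_div_less)
lemma mod_lt: "i < a * b \<Longrightarrow> i mod b < (b::nat)"
proof -
  assume "i < a * b"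
  then have "b > 0" by (cases b) auto
  then show ?thesis by simp
qed



lemma kron_transpose: "transpose_mat (kron A B) = kron (transpose_mat A) (transpose_mat B)"
  by (rule eq_matI, auto simp: div_lt mod_lt)



lemma kron_mult:
  fixes A :: "'a::comm_semiring_1 mat"
  assumes A: "A \<in> carrier_mat a1 a2" and C: "C \<in> carrier_mat a2 a3"
    and B: "B \<in> carrier_mat b1 b2" and D: "D \<in> carrier_mat b2 b3"
  shows "kron A B * kron C D = kron (A*C) (B*D)"
proof (rule eq_matI)
  fix i j assume i: "i < dim_row (kron (A*C) (B*D))" and j: "j < dim_col (kron (A*C) (B*D))"
  have i': "i < a1*b1" and j': "j < a3*b3" using i j A B C D by auto
  have "(kron A B * kron C D) $$ (i,j) = (\<Sum>k\<in>{0..<a2*b2}. kron A B $$ (i,k) * kron C D $$ (k,j))"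
    using i' j' A B C D by (simp add: scalar_prod_def)
  also have "\<dots> = (\<Sum>k\<in>{0..<a2*b2}. (\<lambda>p q. (A $$ (i div b1, p) * C $$ (p, j div b3)) * (B $$ (i mod b1, q) * D $$ (q, j mod b3))) (k div b2) (k mod b2))"
    by (rule sum.cong, use i' j' A B C D in \<open>auto simp: algebra_simps\<close>)
  also have "\<dots> = (\<Sum>p\<in>{0..<a2}. \<Sum>q\<in>{0..<b2}. (A $$ (i div b1, p) * C $$ (p, j div b3)) * (B $$ (i mod b1, q) * D $$ (q, j mod b3)))"
    by (rule sum_divmod)
  also have "\<dots> = (\<Sum>p\<in>{0..<a2}. A $$ (i div b1, p) * C $$ (p, j div b3)) * (\<Sum>q\<in>{0..<b2}. B $$ (i mod b1, q) * D $$ (q, j mod b3))"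
    by (simp add: sum_product)
  also have "\<dots> = kron (A*C) (B*D) $$ (i,j)"
    using i' j' A B C D by (simp add: scalar_prod_def div_lt mod_lt)
  finally show "(kron A B * kron C D) $$ (i,j) = kron (A*C) (B*D) $$ (i,j)" .
qed (use A B C D in auto)



lemma kron_one: "kron (1\<^sub>m p) (1\<^sub>m q) = (1\<^sub>m (p*q) :: 'a::semiring_1 mat)"
proof (rule eq_matI)
  fix i j assume "i < dim_row (1\<^sub>m (p*q) :: 'a mat)" "j < dim_col (1\<^sub>m (p*q) :: 'a mat)"
  then have i: "i < p*q" and j: "j < p*q" by auto
  have dl: "i div q < p" "j div q < p" "i mod q < q" "j mod q < q" using i j div_lt mod_lt by blast+
  have e: "i = j" if "i div q = j div q" "i mod q = j mod q"
  proof -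
    have "i = i div q * q + i mod q" by (rule div_mult_mod_eq[symmetric])
    also have "\<dots> = j div q * q + j mod q" using that by (simp only:)
    also have "\<dots> = j" by (rule div_mult_mod_eq)
    finally show ?thesis .
  qed
  show "kron (1\<^sub>m p) (1\<^sub>m q) $$ (i,j) = (1\<^sub>m (p*q) :: 'a mat) $$ (i,j)"
  proof (cases "i = j")
    case True then show ?thesis using i dl by simp
  next
    case False then show ?thesis using i j dl e by (auto simp: index_one_mat)
  qed
qed auto



lemma sum_split_add: "(\<Sum>k\<in>{0..<(c1::nat)+c2}. f k) = (\<Sum>k\<in>{0..<c1}. f k) + (\<Sum>k\<in>{0..<c2}. f (c1+k))"
proof -
  have "(\<Sum>k\<in>{0..<c1+c2}. f k) = (\<Sum>k\<in>{0..<c1}. f k) + (\<Sum>k\<in>{c1..<c1+c2}. f k)"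
    using sum.atLeastLessThan_concat[of 0 c1 "c1+c2" f] by simp
  also have "(\<Sum>k\<in>{c1..<c1+c2}. f k) = (\<Sum>k\<in>{0..<c2}. f (c1+k))"
    using sum.shift_bounds_nat_ivl[of f 0 c1 c2] by (simp add: add.commute)
  finally show ?thesis .
qed

lemma hcat_dim[simp]: "dim_row (hcat X Y) = dim_row X" "dim_col (hcat X Y) = dim_col X + dim_col Y"
  by (auto simp: hcat_def)

lemma hcat_carrier[simp]: "X \<in> carrier_mat r c1 \<Longrightarrow> Y \<in> carrier_mat r' c2 \<Longrightarrow> hcat X Y \<in> carrier_mat r (c1+c2)"
  by (metis carrier_matD(1) carrier_matD(2) carrier_matI hcat_dim(1) hcat_dim(2))

lemma hcat_index: "i < dim_row X \<Longrightarrow> j < dim_col X + dim_col Y \<Longrightarrow>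
   hcat X Y $$ (i,j) = (if j < dim_col X then X $$ (i,j) else Y $$ (i, j - dim_col X))"
  by (auto simp: hcat_def)

lemma hcat_mult_T:
  fixes X :: "'a::comm_semiring_1 mat"
  assumes X: "X \<in> carrier_mat r c1" and Y: "Y \<in> carrier_mat r c2"
    and Z: "Z \<in> carrier_mat s c1" and W: "W \<in> carrier_mat s c2"
  shows "hcat X Y * transpose_mat (hcat Z W) = X * transpose_mat Z + Y * transpose_mat W"
proof (rule eq_matI)
  fix i j assume i: "i < dim_row (X * transpose_mat Z + Y * transpose_mat W)"
    and j: "j < dim_col (X * transpose_mat Z + Y * transpose_mat W)"
  have i': "i < r" and j': "j < s" using i j X Y Z W by auto
  have "(hcat X Y * transpose_mat (hcat Z W)) $$ (i,j) =
     (\<Sum>k\<in>{0..<c1+c2}. hcat X Y $$ (i,k) * hcat Z W $$ (j,k))"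
    using i' j' X Y Z W by (simp add: scalar_prod_def)
  also have "\<dots> = (\<Sum>k\<in>{0..<c1}. hcat X Y $$ (i,k) * hcat Z W $$ (j,k)) +
                  (\<Sum>k\<in>{0..<c2}. hcat X Y $$ (i,c1+k) * hcat Z W $$ (j,c1+k))"
    by (rule sum_split_add)
  also have "\<dots> = (\<Sum>k\<in>{0..<c1}. X $$ (i,k) * Z $$ (j,k)) + (\<Sum>k\<in>{0..<c2}. Y $$ (i,k) * W $$ (j,k))"
    using i' j' X Y Z W by (simp add: hcat_index)
  also have "\<dots> = (X * transpose_mat Z + Y * transpose_mat W) $$ (i,j)"
    using i' j' X Y Z W by (simp add: scalar_prod_def)
  finally show "(hcat X Y * transpose_mat (hcat Z W)) $$ (i,j) = (X * transpose_mat Z + Y * transpose_mat W) $$ (i,j)" .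
qed (use X Y Z W in auto)

lemma hcat_mult_vec:
  fixes X :: "'a::comm_semiring_1 mat"
  assumes X: "X \<in> carrier_mat r c1" and Y: "Y \<in> carrier_mat r c2" and x: "x \<in> carrier_vec (c1+c2)"
  shows "hcat X Y *\<^sub>v x = X *\<^sub>v vec c1 (\<lambda>i. x $ i) + Y *\<^sub>v vec c2 (\<lambda>i. x $ (c1+i))"
proof (rule eq_vecI)
  fix i assume "i < dim_vec (X *\<^sub>v vec c1 (\<lambda>i. x $ i) + Y *\<^sub>v vec c2 (\<lambda>i. x $ (c1+i)))"
  then have i: "i < r" using X Y by simp
  have "(hcat X Y *\<^sub>v x) $ i = (\<Sum>k\<in>{0..<c1+c2}. hcat X Y $$ (i,k) * x $ k)"
    using i X Y x by (simp add: scalar_prod_def)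
  also have "\<dots> = (\<Sum>k\<in>{0..<c1}. hcat X Y $$ (i,k) * x $ k) + (\<Sum>k\<in>{0..<c2}. hcat X Y $$ (i,c1+k) * x $ (c1+k))"
    by (rule sum_split_add)
  also have "\<dots> = (\<Sum>k\<in>{0..<c1}. X $$ (i,k) * x $ k) + (\<Sum>k\<in>{0..<c2}. Y $$ (i,k) * x $ (c1+k))"
    using i X Y by (simp add: hcat_index)
  also have "\<dots> = (X *\<^sub>v vec c1 (\<lambda>i. x $ i) + Y *\<^sub>v vec c2 (\<lambda>i. x $ (c1+i))) $ i"
    using i X Y by (simp add: scalar_prod_def)
  finally show "(hcat X Y *\<^sub>v x) $ i = (X *\<^sub>v vec c1 (\<lambda>i. x $ i) + Y *\<^sub>v vec c2 (\<lambda>i. x $ (c1+i))) $ i" .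
qed (use X Y in auto)

definition Lmat :: "nat \<Rightarrow> real mat" where
  "Lmat n = mat (n - 1) n (\<lambda>(i,k). if k \<le> i then 1 / real n else 0)"

lemma Bmat_carrier[simp]: "Bmat n \<in> carrier_mat n (n - 1)"
  by (auto simp: Bmat_def Mmat_def)

lemma Lmat_carrier[simp]: "Lmat n \<in> carrier_mat (n - 1) n"
  by (auto simp: Lmat_def)

lemma Bmat_dim[simp]: "dim_row (Bmat n) = n" "dim_col (Bmat n) = n - 1"
  by (auto simp: Bmat_def Mmat_def)
lemma Lmat_dim[simp]: "dim_row (Lmat n) = n - 1" "dim_col (Lmat n) = n"
  by (auto simp: Lmat_def)

lemma Lmat_Bmat: assumes n: "n > 0" shows "Lmat n * Bmat n = 1\<^sub>m (n - 1)"
proof (rule eq_matI)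
  fix i j assume "i < dim_row (1\<^sub>m (n - 1) :: real mat)" "j < dim_col (1\<^sub>m (n - 1) :: real mat)"
  then have i: "i < n - 1" and j: "j < n - 1" by auto
  have "(Lmat n * Bmat n) $$ (i,j) = (\<Sum>k\<in>{0..<n}. Lmat n $$ (i,k) * Bmat n $$ (k,j))"
    using i j by (simp add: scalar_prod_def)
  also have "\<dots> = (\<Sum>k\<in>{0..<n}. (if k = j then (if j \<le> i then 1 else 0) else 0) - (if k = j + 1 then (if j + 1 \<le> i then 1 else 0) else 0))"
    by (rule sum.cong, use i j n in \<open>auto simp: Lmat_def Bmat_def Mmat_def\<close>)
  also have "\<dots> = (if j \<le> i then 1 else 0) - (if j + 1 \<le> i then 1 else 0)"
    using i j by (auto simp: sum_subtractf)
  also have "\<dots> = (1\<^sub>m (n - 1) :: real mat) $$ (i,j)"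
    using i j by auto
  finally show "(Lmat n * Bmat n) $$ (i,j) = (1\<^sub>m (n - 1) :: real mat) $$ (i,j)" .
qed auto




lemma MP_unique:
  assumes A: "A \<in> carrier_mat d d" and hX: "is_MP_pinv A X" and hY: "is_MP_pinv A Y"
  shows "X = Y"
proof -
  have X: "X \<in> carrier_mat d d" and Y: "Y \<in> carrier_mat d d" using hX hY A by (auto simp: is_MP_pinv_def)
  have AT: "transpose_mat A \<in> carrier_mat d d" and XT: "transpose_mat X \<in> carrier_mat d d"
    and YT: "transpose_mat Y \<in> carrier_mat d d" using A X Y by auto
  have x1: "A * (X * A) = A" and x2: "X * (A * X) = X" and x3: "transpose_mat X * transpose_mat A = A * X"
    and x4: "transpose_mat A * transpose_mat X = X * A"
    using hX A X unfolding is_MP_pinv_def by (auto simp: transpose_mult[of _ d d _ d])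
  have y1: "A * (Y * A) = A" and y2: "Y * (A * Y) = Y" and y3: "transpose_mat Y * transpose_mat A = A * Y"
    and y4: "transpose_mat A * transpose_mat Y = Y * A"
    using hY A Y unfolding is_MP_pinv_def by (auto simp: transpose_mult[of _ d d _ d])
  have F1: "transpose_mat A * (A * Y) = transpose_mat A"
  proof -
    have "transpose_mat A = transpose_mat ((A * Y) * A)" using y1 A Y by (simp add: assoc_mult_mat[of _ d d _ d _ d])
    also have "\<dots> = transpose_mat A * transpose_mat (A * Y)" using A Y by (simp add: transpose_mult[of _ d d _ d])
    also have "transpose_mat (A * Y) = A * Y" using y3 A Y by (simp add: transpose_mult[of _ d d _ d])
    finally show ?thesis by (simp add: assoc_mult_mat[of _ d d _ d _ d])
  qed
  have F2: "(X * A) * transpose_mat A = transpose_mat A"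
  proof -
    have "transpose_mat A = transpose_mat (A * (X * A))" using x1 by (simp add: assoc_mult_mat[of _ d d _ d _ d])
    also have "\<dots> = transpose_mat (X * A) * transpose_mat A" using A X by (simp add: transpose_mult[of _ d d _ d])
    also have "transpose_mat (X * A) = X * A" using x4 A X by (simp add: transpose_mult[of _ d d _ d])
    finally show ?thesis by (simp add: assoc_mult_mat[of _ d d _ d _ d])
  qed
  have "X = X * (A * X)" using x2 by (simp add: assoc_mult_mat[of _ d d _ d _ d])
  also have "A * X = transpose_mat X * transpose_mat A" using x3 by (simp add: assoc_mult_mat[of _ d d _ d _ d])
  also have "transpose_mat A = transpose_mat A * (A * Y)" using F1 by (simp add: assoc_mult_mat[of _ d d _ d _ d])
  also have "X * (transpose_mat X * (transpose_mat A * (A * Y))) = X * ((transpose_mat X * transpose_mat A) * (A * Y))"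
    using A X Y AT XT YT by (simp add: assoc_mult_mat[of _ d d _ d _ d])
  also have "transpose_mat X * transpose_mat A = A * X" using x3 by (simp add: assoc_mult_mat[of _ d d _ d _ d])
  also have "X * ((A * X) * (A * Y)) = (X * (A * X)) * (A * Y)" using A X Y AT XT YT by (simp add: assoc_mult_mat[of _ d d _ d _ d])
  also have "X * (A * X) = X" using x2 by (simp add: assoc_mult_mat[of _ d d _ d _ d])
  finally have eX: "X = X * (A * Y)" .
  have "Y = (Y * A) * Y" using y2 A Y by (simp add: assoc_mult_mat[of _ d d _ d _ d])
  also have "Y * A = transpose_mat A * transpose_mat Y" using y4 by (simp add: assoc_mult_mat[of _ d d _ d _ d])
  also have "transpose_mat A = (X * A) * transpose_mat A" using F2 by (simp add: assoc_mult_mat[of _ d d _ d _ d])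
  also have "(X * A) * transpose_mat A * transpose_mat Y * Y = (X * A) * (transpose_mat A * transpose_mat Y) * Y"
    using A X Y AT XT YT by (simp add: assoc_mult_mat[of _ d d _ d _ d])
  also have "transpose_mat A * transpose_mat Y = Y * A" using y4 by (simp add: assoc_mult_mat[of _ d d _ d _ d])
  also have "(X * A) * (Y * A) * Y = X * (A * (Y * (A * Y)))" using A X Y AT XT YT by (simp add: assoc_mult_mat[of _ d d _ d _ d])
  also have "Y * (A * Y) = Y" using y2 by (simp add: assoc_mult_mat[of _ d d _ d _ d])
  finally have eY: "Y = X * (A * Y)" .
  show ?thesis using eX eY by (simp add: assoc_mult_mat[of _ d d _ d _ d])
qed

lemma MP_candidate:
  fixes A Ai P Q :: "real mat"
  assumes A: "A \<in> carrier_mat d d" and Ai: "Ai \<in> carrier_mat d d"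
    and P: "P \<in> carrier_mat d d" and Q: "Q \<in> carrier_mat d d"
    and APQ: "A = P + Q" and PQ: "P * Q = 0\<^sub>m d d" and QP: "Q * P = 0\<^sub>m d d"
    and inv1: "A * Ai = 1\<^sub>m d" and inv2: "Ai * A = 1\<^sub>m d"
    and Ps: "transpose_mat P = P" and Qs: "transpose_mat Q = Q"
  shows "is_MP_pinv P (Ai * P * Ai)"
proof -
  have As: "transpose_mat A = A" using APQ Ps Qs P Q by (simp add: transpose_add)
  have Ais: "transpose_mat Ai = Ai"
  proof -
    have "transpose_mat Ai * A = transpose_mat (A * Ai)"
      using A Ai As by (simp add: transpose_mult[of _ d d _ d])
    also have "\<dots> = 1\<^sub>m d" using inv1 by (simp add: assoc_mult_mat[of _ d d _ d _ d])
    finally have l: "transpose_mat Ai * A = 1\<^sub>m d" .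
    have "transpose_mat Ai = transpose_mat Ai * (A * Ai)" using inv1 Ai by (simp add: assoc_mult_mat[of _ d d _ d _ d])
    also have "\<dots> = (transpose_mat Ai * A) * Ai" using A Ai by (simp add: assoc_mult_mat[of _ d d _ d _ d])
    finally show ?thesis using l Ai by (simp add: assoc_mult_mat[of _ d d _ d _ d])
  qed
  have AP: "A * P = P * P" using APQ P Q QP by (simp add: add_mult_distrib_mat[of _ d d])
  have PA: "P * A = P * P" using APQ P Q PQ by (simp add: mult_add_distrib_mat[of _ d d])
  have AQ: "A * Q = Q * Q" using APQ P Q PQ by (simp add: add_mult_distrib_mat[of _ d d])
  have QA: "Q * A = Q * Q" using APQ P Q QP by (simp add: mult_add_distrib_mat[of _ d d])
  have comm: "Ai * P = P * Ai"
  proof -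
    have "Ai * P = Ai * P * (A * Ai)" using inv1 Ai P by (simp add: assoc_mult_mat[of _ d d _ d _ d])
    also have "\<dots> = Ai * (P * A) * Ai" using A Ai P by (simp add: assoc_mult_mat[of _ d d _ d _ d])
    also have "P * A = A * P" using AP PA by (simp add: assoc_mult_mat[of _ d d _ d _ d])
    also have "Ai * (A * P) * Ai = (Ai * A) * P * Ai" using A Ai P by (simp add: assoc_mult_mat[of _ d d _ d _ d])
    finally show ?thesis using inv2 P Ai by (simp add: assoc_mult_mat[of _ d d _ d _ d])
  qed
  have commQ: "Ai * Q = Q * Ai"
  proof -
    have "Ai * Q = Ai * Q * (A * Ai)" using inv1 Ai Q by (simp add: assoc_mult_mat[of _ d d _ d _ d])
    also have "\<dots> = Ai * (Q * A) * Ai" using A Ai Q by (simp add: assoc_mult_mat[of _ d d _ d _ d])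
    also have "Q * A = A * Q" using AQ QA by (simp add: assoc_mult_mat[of _ d d _ d _ d])
    also have "Ai * (A * Q) * Ai = (Ai * A) * Q * Ai" using A Ai Q by (simp add: assoc_mult_mat[of _ d d _ d _ d])
    finally show ?thesis using inv2 Q Ai by (simp add: assoc_mult_mat[of _ d d _ d _ d])
  qed
  have PAiQ: "P * (Ai * Q) = 0\<^sub>m d d"
  proof -
    have "P * (Ai * Q) = (P * Q) * Ai" using commQ P Q Ai by (simp add: assoc_mult_mat[of _ d d _ d _ d])
    then show ?thesis using PQ Ai by (simp add: assoc_mult_mat[of _ d d _ d _ d])
  qed
  have key: "P * (Ai * P) = P"
  proof -
    have "P = P * (Ai * A)" using inv2 P by (simp add: assoc_mult_mat[of _ d d _ d _ d])
    also have "\<dots> = P * (Ai * P) + P * (Ai * Q)" using APQ P Q Ai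
      by (simp add: mult_add_distrib_mat[of _ d d _ d])
    finally show ?thesis using PAiQ P Ai by (simp add: assoc_mult_mat[of _ d d _ d _ d])
  qed
  let ?X = "Ai * P * Ai"
  have X: "?X \<in> carrier_mat d d" using Ai P by (simp add: assoc_mult_mat[of _ d d _ d _ d])
  have c1: "P * ?X * P = P"
  proof -
    have "P * ?X * P = (P * (Ai * P)) * (Ai * P)" using P Ai by (simp add: assoc_mult_mat[of _ d d _ d _ d])
    also have "\<dots> = P" using key by (simp add: assoc_mult_mat[of _ d d _ d _ d])
    finally show ?thesis .
  qed
  have c2: "?X * P * ?X = ?X"
  proof -
    have "?X * P * ?X = Ai * ((P * (Ai * P)) * (Ai * (P * Ai)))" using P Ai by (simp add: assoc_mult_mat[of _ d d _ d _ d])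
    also have "\<dots> = Ai * (P * (Ai * (P * Ai)))" by (simp only: key)
    also have "\<dots> = Ai * ((P * (Ai * P)) * Ai)" using P Ai by (simp add: assoc_mult_mat[of _ d d _ d _ d])
    also have "\<dots> = Ai * (P * Ai)" by (simp only: key)
    also have "\<dots> = ?X" using P Ai by (simp add: assoc_mult_mat[of _ d d _ d _ d])
    finally show ?thesis .
  qed
  have PX: "P * ?X = P * Ai"
  proof -
    have "P * ?X = (P * (Ai * P)) * Ai" using P Ai by (simp add: assoc_mult_mat[of _ d d _ d _ d])
    then show ?thesis using key by (simp add: assoc_mult_mat[of _ d d _ d _ d])
  qed
  have XP: "?X * P = Ai * P"
  proof -
    have "?X * P = Ai * (P * (Ai * P))" using P Ai by (simp add: assoc_mult_mat[of _ d d _ d _ d])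
    then show ?thesis using key by (simp add: assoc_mult_mat[of _ d d _ d _ d])
  qed
  have c3: "transpose_mat (P * ?X) = P * ?X"
    unfolding PX using P Ai Ps Ais comm by (simp add: transpose_mult[of _ d d _ d])
  have c4: "transpose_mat (?X * P) = ?X * P"
    unfolding XP using P Ai Ps Ais comm by (simp add: transpose_mult[of _ d d _ d])
  show ?thesis unfolding is_MP_pinv_def using X P c1 c2 c3 c4 by auto
qed

lemma pinv_eq: assumes "A \<in> carrier_mat d d" "is_MP_pinv A X" shows "pinv A = X"
  unfolding pinv_def using assms MP_unique by (intro the_equality) blast+




lemma sp_self_nonneg: "(v::real vec) \<bullet> v \<ge> 0"
  unfolding scalar_prod_def by (rule sum_nonneg) auto

lemma sp_self_zero: assumes v: "(v::real vec) \<in> carrier_vec k" and z: "v \<bullet> v = 0" shows "v = 0\<^sub>v k"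
proof (rule eq_vecI)
  fix i assume "i < dim_vec (0\<^sub>v k :: real vec)"
  then have i: "i < k" by simp
  have "(\<Sum>j\<in>{0..<dim_vec v}. v $ j * v $ j) = 0" using z unfolding scalar_prod_def by simp
  then have "\<forall>j\<in>{0..<dim_vec v}. v $ j * v $ j = 0"
    by (subst sum_nonneg_eq_0_iff[symmetric]) auto
  then show "v $ i = 0\<^sub>v k $ i" using i v by auto
qed (use v in auto)

lemma Bux_carrier[simp]: "Bux n \<in> carrier_mat (n*n) (n*(n-1))" unfolding Bux_def by (rule kron_carrier[OF one_carrier_mat Bmat_carrier])
lemma Bvy_carrier[simp]: "Bvy n \<in> carrier_mat (n*n) ((n-1)*n)" unfolding Bvy_def by (rule kron_carrier[OF Bmat_carrier one_carrier_mat])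
lemma Bqx_carrier[simp]: "Bqx n \<in> carrier_mat ((n-1)*n) ((n-1)*(n-1))" unfolding Bqx_def by (rule kron_carrier[OF one_carrier_mat Bmat_carrier])
lemma Bqy_carrier[simp]: "Bqy n \<in> carrier_mat (n*(n-1)) ((n-1)*(n-1))" unfolding Bqy_def by (rule kron_carrier[OF Bmat_carrier one_carrier_mat])
lemma B_dims[simp]: "dim_row (Bux n) = n*n" "dim_col (Bux n) = n*(n-1)"
  "dim_row (Bvy n) = n*n" "dim_col (Bvy n) = (n-1)*n"
  "dim_row (Bqx n) = (n-1)*n" "dim_col (Bqx n) = (n-1)*(n-1)"
  "dim_row (Bqy n) = n*(n-1)" "dim_col (Bqy n) = (n-1)*(n-1)"
  using Bux_carrier[of n] Bvy_carrier[of n] Bqx_carrier[of n] Bqy_carrier[of n] by (auto dest: carrier_matD)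

lemma BB_carrier[simp]: "BB n \<in> carrier_mat (n*n) (n*(n-1) + (n-1)*n)"
  unfolding BB_def by (rule hcat_carrier[OF uminus_carrier_mat[OF Bux_carrier] uminus_carrier_mat[OF Bvy_carrier]])
lemma CC_carrier[simp]: "CC n \<in> carrier_mat ((n-1)*(n-1)) (n*(n-1) + (n-1)*n)"
  unfolding CC_def by (rule hcat_carrier[OF uminus_carrier_mat[OF transpose_carrier_mat[THEN iffD2, OF Bqy_carrier]] transpose_carrier_mat[THEN iffD2, OF Bqx_carrier]])

lemma BmT_carrier: "transpose_mat (Bmat n) \<in> carrier_mat (n - 1) n"
  using Bmat_carrier[of n] by simp

lemma Bux_Bqy: "Bux n * Bqy n = kron (Bmat n) (Bmat n)"
  unfolding Bux_def Bqy_def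
  using kron_mult[OF one_carrier_mat Bmat_carrier Bmat_carrier one_carrier_mat, of n n] by simp

lemma Bvy_Bqx: "Bvy n * Bqx n = kron (Bmat n) (Bmat n)"
  unfolding Bvy_def Bqx_def
  using kron_mult[OF Bmat_carrier one_carrier_mat one_carrier_mat Bmat_carrier, of n n] by simp

lemma BxT_By: "transpose_mat (Bux n) * Bvy n = kron (Bmat n) (transpose_mat (Bmat n))"
  unfolding Bux_def Bvy_def kron_transpose transpose_one
  using kron_mult[OF one_carrier_mat Bmat_carrier BmT_carrier one_carrier_mat, of n n] by simp

lemma Bqy_BqxT: "Bqy n * transpose_mat (Bqx n) = kron (Bmat n) (transpose_mat (Bmat n))"
  unfolding Bqy_def Bqx_def kron_transpose transpose_one
  using kron_mult[OF Bmat_carrier one_carrier_mat one_carrier_mat BmT_carrier, of n n] by simp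

lemma Lux: assumes "n > 0" shows "kron (1\<^sub>m n) (Lmat n) * Bux n = 1\<^sub>m (n*(n-1))"
  unfolding Bux_def
  using kron_mult[OF one_carrier_mat one_carrier_mat Lmat_carrier Bmat_carrier, of n n]
  by (simp add: Lmat_Bmat[OF assms] kron_one)

lemma Lvy: assumes "n > 0" shows "kron (Lmat n) (1\<^sub>m n) * Bvy n = 1\<^sub>m ((n-1)*n)"
  unfolding Bvy_def
  using kron_mult[OF Lmat_carrier Bmat_carrier one_carrier_mat one_carrier_mat, of n n]
  by (simp add: Lmat_Bmat[OF assms] kron_one)

lemma BB_CCT: "BB n * transpose_mat (CC n) = 0\<^sub>m (n*n) ((n-1)*(n-1))"
proof -
  have "BB n * transpose_mat (CC n) = (- Bux n) * transpose_mat (- transpose_mat (Bqy n)) + (- Bvy n) * transpose_mat (transpose_mat (Bqx n))"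
    unfolding BB_def CC_def
    by (rule hcat_mult_T[OF uminus_carrier_mat[OF Bux_carrier] uminus_carrier_mat[OF Bvy_carrier]
          uminus_carrier_mat[OF transpose_carrier_mat[THEN iffD2, OF Bqy_carrier]] transpose_carrier_mat[THEN iffD2, OF Bqx_carrier]])
  also have "\<dots> = Bux n * Bqy n + - (Bvy n * Bqx n)"
    by (simp add: transpose_uminus)
  also have "\<dots> = 0\<^sub>m (n*n) ((n-1)*(n-1))"
  proof -
    have Kc: "kron (Bmat n) (Bmat n) \<in> carrier_mat (n*n) ((n-1)*(n-1))"
      by (rule kron_carrier[OF Bmat_carrier Bmat_carrier])
    show ?thesis unfolding Bux_Bqy Bvy_Bqx
      by (rule trans[OF minus_add_uminus_mat[OF Kc Kc, symmetric] minus_r_inv_mat[OF Kc]])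
  qed
  finally show ?thesis .
qed




lemma mat_vec_zero: assumes A: "(A :: real mat) \<in> carrier_mat r c" shows "A *\<^sub>v 0\<^sub>v c = 0\<^sub>v r"
proof (rule eq_vecI)
  fix i assume "i < dim_vec (0\<^sub>v r :: real vec)"
  then have i: "i < r" by simp
  have dr: "dim_row A = r" and dc: "dim_col A = c" using carrier_matD[OF A] by auto
  have "row A i \<in> carrier_vec c" by (rule carrier_vecI) (simp add: dc)
  then show "(A *\<^sub>v 0\<^sub>v c) $ i = 0\<^sub>v r $ i" using i dr by simp
next
  show "dim_vec (A *\<^sub>v 0\<^sub>v c) = dim_vec (0\<^sub>v r :: real vec)" using carrier_matD[OF A] by simp
qed

theorem corollary1:
  fixes n :: nat
  assumes "n \<ge> 2"
  shows "invertible_mat (AN n) \<and>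
         inverts_mat (AN n) (pinv ((BB n)\<^sup>T * BB n) + pinv ((CC n)\<^sup>T * CC n)) \<and>
         inverts_mat (pinv ((BB n)\<^sup>T * BB n) + pinv ((CC n)\<^sup>T * CC n)) (AN n)"
proof -
  have n0: "n > 0" using assms by simp
  define N1 where "N1 = n*(n-1)"
  define N2 where "N2 = (n-1)*n"
  define d where "d = N1 + N2"
  define m2 where "m2 = (n-1)*(n-1)"
  have BBc: "BB n \<in> carrier_mat (n*n) d" using BB_carrier[of n] unfolding d_def N1_def N2_def .
  have CCc: "CC n \<in> carrier_mat m2 d" using CC_carrier[of n] unfolding d_def N1_def N2_def m2_def .
  have BBTc: "transpose_mat (BB n) \<in> carrier_mat d (n*n)" using BBc by simp
  have CCTc: "transpose_mat (CC n) \<in> carrier_mat d m2" using CCc by simp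
  define P where "P = transpose_mat (BB n) * BB n"
  define Q where "Q = transpose_mat (CC n) * CC n"
  have Pc: "P \<in> carrier_mat d d" unfolding P_def by (rule mult_carrier_mat[OF BBTc BBc])
  have Qc: "Q \<in> carrier_mat d d" unfolding Q_def by (rule mult_carrier_mat[OF CCTc CCc])
  have APQ: "AN n = P + Q" unfolding AN_def P_def Q_def ..
  have Ac: "AN n \<in> carrier_mat d d" unfolding APQ by (rule add_carrier_mat[OF Qc])
  have BC0: "BB n * transpose_mat (CC n) = 0\<^sub>m (n*n) m2" using BB_CCT[of n] unfolding m2_def .
  have CB0: "CC n * transpose_mat (BB n) = 0\<^sub>m m2 (n*n)"
  proof -
    have "CC n * transpose_mat (BB n) = transpose_mat (BB n * transpose_mat (CC n))"
      using transpose_mult[OF BBc CCTc] by simp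
    then show ?thesis using BC0 by simp
  qed
  have PQ: "P * Q = 0\<^sub>m d d"
  proof -
    have "P * Q = transpose_mat (BB n) * (BB n * (transpose_mat (CC n) * CC n))"
      unfolding P_def Q_def by (rule assoc_mult_mat[OF BBTc BBc mult_carrier_mat[OF CCTc CCc]])
    also have "BB n * (transpose_mat (CC n) * CC n) = (BB n * transpose_mat (CC n)) * CC n"
      by (rule assoc_mult_mat[OF BBc CCTc CCc, symmetric])
    finally show ?thesis using BC0 BBTc CCc by simp
  qed
  have QP: "Q * P = 0\<^sub>m d d"
  proof -
    have "Q * P = transpose_mat (CC n) * (CC n * (transpose_mat (BB n) * BB n))"
      unfolding P_def Q_def by (rule assoc_mult_mat[OF CCTc CCc mult_carrier_mat[OF BBTc BBc]])
    also have "CC n * (transpose_mat (BB n) * BB n) = (CC n * transpose_mat (BB n)) * BB n"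
      by (rule assoc_mult_mat[OF CCc BBTc BBc, symmetric])
    finally show ?thesis using CB0 CCTc BBc by simp
  qed
  have Ps: "transpose_mat P = P" unfolding P_def using transpose_mult[OF BBTc BBc] by simp
  have Qs: "transpose_mat Q = Q" unfolding Q_def using transpose_mult[OF CCTc CCc] by simp
  have dA: "det (AN n) \<noteq> 0"
  proof
    assume "det (AN n) = 0"
    then obtain x where x: "x \<in> carrier_vec d" and x0: "x \<noteq> 0\<^sub>v d" and Ax: "AN n *\<^sub>v x = 0\<^sub>v d"
      using det_0_iff_vec_prod_zero_field[OF Ac] by blast
    define a where "a = BB n *\<^sub>v x"
    define c where "c = CC n *\<^sub>v x"
    have ac: "a \<in> carrier_vec (n*n)" "c \<in> carrier_vec m2" unfolding a_def c_def using BBc CCc x by auto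
    have e1: "x \<bullet> (P *\<^sub>v x) = a \<bullet> a"
    proof -
      have "P *\<^sub>v x = transpose_mat (BB n) *\<^sub>v a" unfolding P_def a_def
        by (rule assoc_mult_mat_vec[OF BBTc BBc x])
      then have "x \<bullet> (P *\<^sub>v x) = (transpose_mat (BB n) *\<^sub>v a) \<bullet> x"
        using comm_scalar_prod[OF x, of "transpose_mat (BB n) *\<^sub>v a"] BBTc ac by simp
      also have "\<dots> = a \<bullet> a" using transpose_vec_mult_scalar[OF BBc x ac(1)] unfolding a_def by simp
      finally show ?thesis .
    qed
    have e2: "x \<bullet> (Q *\<^sub>v x) = c \<bullet> c"
    proof -
      have "Q *\<^sub>v x = transpose_mat (CC n) *\<^sub>v c" unfolding Q_def c_def
        by (rule assoc_mult_mat_vec[OF CCTc CCc x])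
      then have "x \<bullet> (Q *\<^sub>v x) = (transpose_mat (CC n) *\<^sub>v c) \<bullet> x"
        using comm_scalar_prod[OF x, of "transpose_mat (CC n) *\<^sub>v c"] CCTc ac by simp
      also have "\<dots> = c \<bullet> c" using transpose_vec_mult_scalar[OF CCc x ac(2)] unfolding c_def by simp
      finally show ?thesis .
    qed
    have "0 = x \<bullet> (AN n *\<^sub>v x)" using Ax x by simp
    also have "AN n *\<^sub>v x = P *\<^sub>v x + Q *\<^sub>v x" unfolding APQ by (rule add_mult_distrib_mat_vec[OF Pc Qc x])
    also have "x \<bullet> (P *\<^sub>v x + Q *\<^sub>v x) = x \<bullet> (P *\<^sub>v x) + x \<bullet> (Q *\<^sub>v x)"
      by (rule scalar_prod_add_distrib[of _ d], use x Pc Qc in auto)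
    finally have "a \<bullet> a + c \<bullet> c = 0" using e1 e2 by simp
    then have "a \<bullet> a = 0" "c \<bullet> c = 0" using sp_self_nonneg[of a] sp_self_nonneg[of c] by linarith+
    then have a0: "a = 0\<^sub>v (n*n)" and c0: "c = 0\<^sub>v m2" using sp_self_zero ac by blast+
    define u where "u = vec N1 (\<lambda>i. x $ i)"
    define v where "v = vec N2 (\<lambda>i. x $ (N1 + i))"
    have uc: "u \<in> carrier_vec N1" and vc: "v \<in> carrier_vec N2" unfolding u_def v_def by auto
    have Buxc: "Bux n \<in> carrier_mat (n*n) N1" using Bux_carrier[of n] unfolding N1_def .
    have Bvyc: "Bvy n \<in> carrier_mat (n*n) N2" using Bvy_carrier[of n] unfolding N2_def .
    have BqyTc: "transpose_mat (Bqy n) \<in> carrier_mat m2 N1"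
      using transpose_carrier_mat[THEN iffD2, OF Bqy_carrier[of n]] unfolding N1_def m2_def .
    have BqxTc: "transpose_mat (Bqx n) \<in> carrier_mat m2 N2"
      using transpose_carrier_mat[THEN iffD2, OF Bqx_carrier[of n]] unfolding N2_def m2_def .
    have x': "x \<in> carrier_vec (N1 + N2)" using x unfolding d_def .
    have aeq: "a = - (Bux n *\<^sub>v u) + - (Bvy n *\<^sub>v v)"
      unfolding a_def BB_def u_def v_def
      using hcat_mult_vec[OF uminus_carrier_mat[OF Buxc] uminus_carrier_mat[OF Bvyc] x'] Buxc Bvyc by (simp add: N1_def N2_def)
    have ceq: "c = - (transpose_mat (Bqy n) *\<^sub>v u) + transpose_mat (Bqx n) *\<^sub>v v"
      unfolding c_def CC_def u_def v_def
      using hcat_mult_vec[OF uminus_carrier_mat[OF BqyTc] BqxTc x'] BqyTc BqxTc by (simp add: N1_def N2_def)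
    define au where "au = Bux n *\<^sub>v u"
    define bv where "bv = Bvy n *\<^sub>v v"
    define cu where "cu = transpose_mat (Bqy n) *\<^sub>v u"
    define dv where "dv = transpose_mat (Bqx n) *\<^sub>v v"
    have auc: "au \<in> carrier_vec (n*n)" and bvc: "bv \<in> carrier_vec (n*n)"
      and cuc: "cu \<in> carrier_vec m2" and dvc: "dv \<in> carrier_vec m2"
      unfolding au_def bv_def cu_def dv_def using Buxc Bvyc BqyTc BqxTc uc vc by auto
    have ab: "\<And>i. i < n*n \<Longrightarrow> au $ i = - (bv $ i)"
    proof -
      fix i assume i: "i < n*n"
      have "a $ i = 0" using a0 i by simp
      moreover have "a $ i = - (au $ i) + - (bv $ i)" unfolding aeq au_def[symmetric] bv_def[symmetric]
        using i auc bvc by simp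
      ultimately show "au $ i = - (bv $ i)" by simp
    qed
    have cd: "\<And>i. i < m2 \<Longrightarrow> cu $ i = dv $ i"
    proof -
      fix i assume i: "i < m2"
      have "c $ i = 0" using c0 i by simp
      moreover have "c $ i = - (cu $ i) + dv $ i" unfolding ceq cu_def[symmetric] dv_def[symmetric]
        using i cuc dvc by simp
      ultimately show "cu $ i = dv $ i" by simp
    qed
    have s1: "au \<bullet> au = - (au \<bullet> bv)"
    proof -
      have "au \<bullet> au = (\<Sum>i\<in>{0..<n*n}. au $ i * au $ i)" using auc unfolding scalar_prod_def by simp
      also have "\<dots> = (\<Sum>i\<in>{0..<n*n}. - (au $ i * bv $ i))" by (rule sum.cong) (auto simp: ab)
      also have "\<dots> = - (au \<bullet> bv)" using bvc unfolding scalar_prod_def by (simp add: sum_negf)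
      finally show ?thesis .
    qed
    have s2: "cu \<bullet> cu = cu \<bullet> dv"
    proof -
      have "cu \<bullet> cu = (\<Sum>i\<in>{0..<m2}. cu $ i * cu $ i)" using cuc unfolding scalar_prod_def by simp
      also have "\<dots> = (\<Sum>i\<in>{0..<m2}. cu $ i * dv $ i)" by (rule sum.cong) (auto simp: cd)
      also have "\<dots> = cu \<bullet> dv" using dvc unfolding scalar_prod_def by simp
      finally show ?thesis .
    qed
    define K where "K = kron (Bmat n) (transpose_mat (Bmat n))"
    have Kc: "K \<in> carrier_mat N1 N2" unfolding K_def N1_def N2_def
      by (rule kron_carrier[OF Bmat_carrier BmT_carrier])
    have s3: "au \<bullet> bv = (K *\<^sub>v v) \<bullet> u"
    proof -
      have "au \<bullet> bv = bv \<bullet> au" using comm_scalar_prod[OF auc bvc] .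
      also have "\<dots> = (transpose_mat (Bux n) *\<^sub>v bv) \<bullet> u"
        unfolding au_def using transpose_vec_mult_scalar[OF Buxc uc bvc] by simp
      also have "transpose_mat (Bux n) *\<^sub>v bv = (transpose_mat (Bux n) * Bvy n) *\<^sub>v v"
        unfolding bv_def using assoc_mult_mat_vec[OF _ Bvyc vc, of "transpose_mat (Bux n)" N1] Buxc by simp
      also have "transpose_mat (Bux n) * Bvy n = K" unfolding K_def by (rule BxT_By)
      finally show ?thesis .
    qed
    have s4: "cu \<bullet> dv = (K *\<^sub>v v) \<bullet> u"
    proof -
      have "cu \<bullet> dv = u \<bullet> (Bqy n *\<^sub>v dv)"
        unfolding cu_def using transpose_vec_mult_scalar[of "Bqy n" N1 m2 dv u] Bqy_carrier[of n] dvc uc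
        unfolding N1_def m2_def by simp
      also have "Bqy n *\<^sub>v dv = (Bqy n * transpose_mat (Bqx n)) *\<^sub>v v"
        unfolding dv_def using assoc_mult_mat_vec[OF _ BqxTc vc, of "Bqy n" N1] Bqy_carrier[of n]
        unfolding N1_def m2_def by simp
      also have "Bqy n * transpose_mat (Bqx n) = K" unfolding K_def by (rule Bqy_BqxT)
      also have "u \<bullet> (K *\<^sub>v v) = (K *\<^sub>v v) \<bullet> u"
        by (rule comm_scalar_prod[OF uc mult_mat_vec_carrier[OF Kc vc]])
      finally show ?thesis .
    qed
    have "au \<bullet> au + cu \<bullet> cu = 0" using s1 s2 s3 s4 by simp
    then have "au \<bullet> au = 0" using sp_self_nonneg[of au] sp_self_nonneg[of cu] by linarith
    then have au0: "au = 0\<^sub>v (n*n)" using sp_self_zero auc by blast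
    have bv0: "bv = 0\<^sub>v (n*n)"
    proof (rule eq_vecI)
      fix i assume "i < dim_vec (0\<^sub>v (n*n) :: real vec)"
      then have i: "i < n*n" by simp
      have "au $ i = 0" using au0 i by simp
      then show "bv $ i = 0\<^sub>v (n*n) $ i" using ab[OF i] i by simp
    qed (use bvc in auto)
    have u0: "u = 0\<^sub>v N1"
    proof -
      have Lc: "kron (1\<^sub>m n) (Lmat n) \<in> carrier_mat (n*(n-1)) (n*n)" by (rule kron_carrier[OF one_carrier_mat Lmat_carrier])
      have "u = (kron (1\<^sub>m n) (Lmat n) * Bux n) *\<^sub>v u" using Lux[OF n0] uc unfolding N1_def by simp
      also have "\<dots> = kron (1\<^sub>m n) (Lmat n) *\<^sub>v au" unfolding au_def
        using assoc_mult_mat_vec[OF Lc Buxc[unfolded N1_def] uc[unfolded N1_def]] .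
      finally show ?thesis using au0 mat_vec_zero[OF Lc] unfolding N1_def by simp
    qed
    have v0: "v = 0\<^sub>v N2"
    proof -
      have Lc: "kron (Lmat n) (1\<^sub>m n) \<in> carrier_mat ((n-1)*n) (n*n)" by (rule kron_carrier[OF Lmat_carrier one_carrier_mat])
      have "v = (kron (Lmat n) (1\<^sub>m n) * Bvy n) *\<^sub>v v" using Lvy[OF n0] vc unfolding N2_def by simp
      also have "\<dots> = kron (Lmat n) (1\<^sub>m n) *\<^sub>v bv" unfolding bv_def
        using assoc_mult_mat_vec[OF Lc Bvyc[unfolded N2_def] vc[unfolded N2_def]] .
      finally show ?thesis using bv0 mat_vec_zero[OF Lc] unfolding N2_def by simp
    qed
    have "x = 0\<^sub>v d"
    proof (rule eq_vecI)
      fix i assume "i < dim_vec (0\<^sub>v d :: real vec)"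
      then have i: "i < N1 + N2" unfolding d_def by simp
      show "x $ i = 0\<^sub>v d $ i"
      proof (cases "i < N1")
        case True
        have "u $ i = 0" using u0 True by simp
        then show ?thesis using True i unfolding u_def d_def by simp
      next
        case False
        then have "i - N1 < N2" using i by simp
        then have "v $ (i - N1) = 0" using v0 by simp
        moreover have "N1 + (i - N1) = i" using False by simp
        ultimately show ?thesis using False i \<open>i - N1 < N2\<close> unfolding v_def d_def by (metis index_vec index_zero_vec(1))
      qed
    qed (use x in auto)
    then show False using x0 by simp
  qed
  from det_non_zero_imp_unit[OF Ac dA, of "()"]
  obtain Ai where Aic: "Ai \<in> carrier_mat d d" and inv2: "Ai * AN n = 1\<^sub>m d" and inv1: "AN n * Ai = 1\<^sub>m d"
    unfolding Units_def ring_mat_def by auto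
  have mpP: "is_MP_pinv P (Ai * P * Ai)"
    by (rule MP_candidate[OF Ac Aic Pc Qc APQ PQ QP inv1 inv2 Ps Qs])
  have APQ': "AN n = Q + P" using APQ comm_add_mat[OF Pc Qc] by simp
  have mpQ: "is_MP_pinv Q (Ai * Q * Ai)"
    by (rule MP_candidate[OF Ac Aic Qc Pc APQ' QP PQ inv1 inv2 Qs Ps])
  have pP: "pinv P = Ai * P * Ai" by (rule pinv_eq[OF Pc mpP])
  have pQ: "pinv Q = Ai * Q * Ai" by (rule pinv_eq[OF Qc mpQ])
  have S: "pinv P + pinv Q = Ai"
  proof -
    have "pinv P + pinv Q = (Ai * P + Ai * Q) * Ai" unfolding pP pQ
      by (rule add_mult_distrib_mat[OF mult_carrier_mat[OF Aic Pc] mult_carrier_mat[OF Aic Qc] Aic, symmetric])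
    also have "Ai * P + Ai * Q = Ai * AN n" unfolding APQ
      by (rule mult_add_distrib_mat[symmetric, OF Aic Pc Qc])
    finally show ?thesis using inv2 Aic by simp
  qed
  have dr: "dim_row (AN n) = d" "dim_col (AN n) = d" "dim_row Ai = d" using Ac Aic by auto
  show ?thesis
    unfolding P_def[symmetric] Q_def[symmetric] S invertible_mat_def inverts_mat_def
    using inv1 inv2 dr by auto
qed


end
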